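(* Let $n\ge 1$, $L>0$, and let $f:[0,1]^n\to\mathbb{R}$ satisfy $|f(x)-f(y)|\le L\|x-y\|$ for all $x,y\in[0,1]^n$, and let $x_*\in[0,1]^n$ be a minimizer of $f$. Run the algorithm described in the context on $f$ for $T\ge1$ queries, producing edge vectors $v_1,\dots,v_T$ and values $f_t=f(P(x_t))$. Then $$\sum_{t=1}^T f_t-\sum_{t=1}^T f(x_* )\le (1+\theta)L\sum_{t=1}^T\|v_t\|,$$ where $\theta=2^{1/n}$.
   Context: Notation: $\|\cdot\|$ is the Euclidean norm; $\Omega=[0,1]^n$; $\theta=2^{1/n}$; $P:\mathbb{R}^n\to\Omega$ is the Euclidean projection onto $\Omega$ (coordinatewise clipping to $[0,1]$); $e_i$ is the $i$-th standard basis vector and $v(i)$ the $i$-th coordinate of $v$. The algorithm maintains a list of candidates, each a triple (center $x$, edge vector $v$, score $s$). Splitting rule: given an evaluated point $x_a$ with edge vector $v_a$ and value $f_a$, let $I$ be an index maximizing $v_a(i)$ over $i\in\{1,\dots,n\}$ (ties broken by smallest index), let $z=\tfrac{v_a(I)}{2}e_I$, and add to the list the two candidates $(x_a+z,\ v_a-z,\ f_a-L\|v_a\|)$ and $(x_a-z,\ v_a-z,\ f_a-L\|v_a\|)$. Initialization: $x_1=v_1=(\theta^{-1},\theta^{-2},\dots,\theta^{-n})$, $f_1=f(P(x_1))$, and apply the splitting rule to $(x_1,v_1,f_1)$. For each $t\ge 2$: remove from the list a candidate with the smallest score (ties arbitrary), call its center $x_t$ and edge vector $v_t$, evaluate $f_t=f(P(x_t))$,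 and apply the splitting rule to $(x_t,v_t,f_t)$. *)

theory Defs
  imports Complex_Main "HOL-Library.Multiset"
begin

text \<open>Vectors of R^n are represented as functions nat => real, using the
coordinates 0..n-1 (coordinate i here is coordinate i+1 of the paper);
all vectors produced by the algorithm vanish outside {..<n}.\<close>

type_synonym vec = "nat \<Rightarrow> real"
type_synonym cand = "vec \<times> vec \<times> real"  \<comment> \<open>(center, edge vector, score)\<close>

definition enorm :: "nat \<Rightarrow> vec \<Rightarrow> real" where
  "enorm n v = sqrt (\<Sum>i<n. (v i)\<^sup>2)"

definition cube :: "nat \<Rightarrow> vec set" where
  "cube n = {x. \<forall>i. (i < n \<longrightarrow> 0 \<le> x i \<and> x i \<le> 1) \<and> (n \<le> i \<longrightarrow> x i = 0)}"

definition proj :: "nat \<Rightarrow> vec \<Rightarrow> vec" where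
  "proj n x = (\<lambda>i. if i < n then min 1 (max 0 (x i)) else 0)"

definition theta :: "nat \<Rightarrow> real" where
  "theta n = 2 powr (1 / real n)"

definition unitv :: "nat \<Rightarrow> vec" where
  "unitv k = (\<lambda>i. if i = k then 1 else 0)"

definition maxidx :: "nat \<Rightarrow> vec \<Rightarrow> nat" where
  "maxidx n v = (LEAST i. i < n \<and> (\<forall>j<n. v j \<le> v i))"

definition split_cands :: "nat \<Rightarrow> real \<Rightarrow> vec \<Rightarrow> vec \<Rightarrow> real \<Rightarrow> cand multiset" where
  "split_cands n L xa va fa =
     (let I = maxidx n va; z = (\<lambda>i. (va I / 2) * unitv I i) in
      {# ((\<lambda>i. xa i + z i), (\<lambda>i. va i - z i), fa - L * enorm n va),
         ((\<lambda>i. xa i - z i), (\<lambda>i. va i - z i), fa - L * enorm n va) #})"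

definition x_init :: "nat \<Rightarrow> vec" where
  "x_init n = (\<lambda>i. if i < n then inverse (theta n ^ (i + 1)) else 0)"

text \<open>States of the algorithm: (candidate list, history of queries (x_t, v_t, f_t) in order).
  algo_reach n L f S holds iff S is reachable by some run (ties in the selection arbitrary).\<close>
inductive algo_reach :: "nat \<Rightarrow> real \<Rightarrow> (vec \<Rightarrow> real) \<Rightarrow> cand multiset \<times> cand list \<Rightarrow> bool"
  for n L f where
  init: "algo_reach n L f
           (split_cands n L (x_init n) (x_init n) (f (proj n (x_init n))),
            [(x_init n, x_init n, f (proj n (x_init n)))])"
| step: "\<lbrakk> algo_reach n L f (C, H); c \<in># C; \<forall>c' \<in># C. snd (snd c) \<le> snd (snd c') \<rbrakk> \<Longrightarrow>
         algo_reach n L f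
           (C - {#c#} + split_cands n L (fst c) (fst (snd c)) (f (proj n (fst c))),
            H @ [(fst c, fst (snd c), f (proj n (fst c)))])"

end

theory Submission
  imports Defs
begin

definition cc :: "nat \<Rightarrow> real" where "cc n = inverse (theta n)"

definition shape :: "nat \<Rightarrow> vec \<Rightarrow> nat \<Rightarrow> bool" where
  "shape n v m = (\<exists>\<sigma>. bij_betw \<sigma> {..<n} {..<n} \<and> (\<forall>i<n. v i = cc n ^ (m + \<sigma> i + 1)))"

definition KK :: "nat \<Rightarrow> real" where "KK n = sqrt (\<Sum>k<n. (cc n ^ (k+1))\<^sup>2)"

lemma theta_gt1: "n \<ge> 1 \<Longrightarrow> theta n > 1"
  unfolding theta_def by (simp add: powr_gt_zero)

lemma theta_pow: "n \<ge> 1 \<Longrightarrow> theta n ^ n = 2"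
proof -
  assume "n \<ge> 1"
  have "theta n ^ n = theta n powr real n" unfolding theta_def
    by (simp add: powr_realpow)
  also have "\<dots> = 2 powr (1 / real n * real n)" unfolding theta_def by (simp add: powr_powr)
  also have "\<dots> = 2" using \<open>n\<ge>1\<close> by simp
  finally show ?thesis .
qed

lemma cc_pos: "n \<ge> 1 \<Longrightarrow> 0 < cc n" unfolding cc_def using theta_gt1[of n] by simp
lemma cc_lt1: "n \<ge> 1 \<Longrightarrow> cc n < 1" unfolding cc_def using theta_gt1[of n]
  by (simp add: inverse_less_1_iff)
lemma cc_pow: "n \<ge> 1 \<Longrightarrow> cc n ^ n = 1/2" unfolding cc_def
  using theta_pow by (simp add: power_inverse)
lemma theta_cc: "n \<ge> 1 \<Longrightarrow> theta n * cc n = 1" unfolding cc_def using theta_gt1[of n]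
  by simp

lemma enorm_shape:
  assumes "n \<ge> 1" "shape n v m"
  shows "enorm n v = cc n ^ m * KK n"
proof -
  obtain \<sigma> where b: "bij_betw \<sigma> {..<n} {..<n}" and v: "\<forall>i<n. v i = cc n ^ (m + \<sigma> i + 1)"
    using assms(2) unfolding shape_def by blast
  have "(\<Sum>i<n. (v i)\<^sup>2) = (\<Sum>i<n. (\<lambda>k. (cc n ^ (m + k + 1))\<^sup>2) (\<sigma> i))"
    using v by (intro sum.cong) auto
  also have "\<dots> = (\<Sum>k<n. (cc n ^ (m + k + 1))\<^sup>2)"
    by (rule sum.reindex_bij_betw[OF b])
  also have "\<dots> = (\<Sum>k<n. (cc n ^ m)\<^sup>2 * (cc n ^ (k+1))\<^sup>2)"
  proof (intro sum.cong refl)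
    fix k
    have "cc n ^ (m + k + 1) = cc n ^ m * cc n ^ (k+1)"
      by (metis add.assoc power_add)
    then show "(cc n ^ (m + k + 1))\<^sup>2 = (cc n ^ m)\<^sup>2 * (cc n ^ (k+1))\<^sup>2"
      by (simp only: power_mult_distrib)
  qed
  also have "\<dots> = (cc n ^ m)\<^sup>2 * (\<Sum>k<n. (cc n ^ (k+1))\<^sup>2)"
    by (rule sum_distrib_left[symmetric])
  finally have "enorm n v = sqrt ((cc n ^ m)\<^sup>2 * (\<Sum>k<n. (cc n ^ (k+1))\<^sup>2))"
    unfolding enorm_def by simp
  also have "\<dots> = cc n ^ m * KK n" unfolding KK_def
    using cc_pos[OF assms(1)] by (simp add: real_sqrt_mult)
  finally show ?thesis .
qed

lemma enorm_mono: "(\<And>i. i < n \<Longrightarrow> \<bar>a i\<bar> \<le> \<bar>b i\<bar>) \<Longrightarrow> enorm n a \<le> enorm n b"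
  unfolding enorm_def
  by (intro real_sqrt_le_mono sum_mono) (simp add: abs_le_square_iff)

lemma enorm_nonneg: "0 \<le> enorm n v" unfolding enorm_def by (simp add: sum_nonneg)

lemma proj_cube: "proj n x \<in> cube n" unfolding proj_def cube_def by auto

lemma clip_le: "\<bar>min 1 (max 0 a) - min 1 (max 0 b)\<bar> \<le> \<bar>a - (b::real)\<bar>"
  by (auto simp: min_def max_def abs_if)

lemma proj_nonexp: "enorm n (\<lambda>i. proj n x i - proj n y i) \<le> enorm n (\<lambda>i. x i - y i)"
  by (rule enorm_mono) (simp add: proj_def clip_le)

lemma proj_nonexp_cube: "y \<in> cube n \<Longrightarrow> enorm n (\<lambda>i. proj n x i - y i) \<le> enorm n (\<lambda>i. x i - y i)"
  by (rule enorm_mono) (auto simp add: proj_def cube_def abs_le_iff min_def max_def)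

lemma coord_le_enorm: "i < n \<Longrightarrow> \<bar>v i\<bar> \<le> enorm n v"
proof -
  assume i: "i < n"
  have "(v i)\<^sup>2 \<le> (\<Sum>j<n. (v j)\<^sup>2)"
    using i by (intro member_le_sum) auto
  then have "sqrt ((v i)\<^sup>2) \<le> enorm n v" unfolding enorm_def by (rule real_sqrt_le_mono)
  then show ?thesis by simp
qed

lemma maxidx_prop:
  assumes "n \<ge> 1"
  shows "maxidx n v < n \<and> (\<forall>j<n. v j \<le> v (maxidx n v))"
proof -
  have "0 \<in> {..<n}" using assms by simp
  then have "finite (v ` {..<n})" "v ` {..<n} \<noteq> {}" by auto
  then have "Max (v ` {..<n}) \<in> v ` {..<n}" by (rule Max_in)
  then obtain i where i: "i < n" "v i = Max (v ` {..<n})" by auto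
  have "\<forall>j<n. v j \<le> v i" using i by auto
  with i(1) have "\<exists>i. i < n \<and> (\<forall>j<n. v j \<le> v i)" by blast
  then show ?thesis unfolding maxidx_def by (rule LeastI_ex)
qed

lemma child_good:
  assumes n: "n \<ge> 1" and L: "L > 0"
    and lip: "\<forall>x\<in>cube n. \<forall>y\<in>cube n. \<bar>f x - f y\<bar> \<le> L * enorm n (\<lambda>i. x i - y i)"
    and sh: "shape n vp m"
    and c: "c \<in># split_cands n L xp vp (f (proj n xp))"
  shows "shape n (fst (snd c)) (Suc m) \<and>
         f (proj n (fst c)) \<le> snd (snd c) + (1 + theta n) * L * enorm n (fst (snd c))"
proof -
  define I where "I = maxidx n vp"
  define z where "z = (\<lambda>i. (vp I / 2) * unitv I i)"
  define v where "v = (\<lambda>i. vp i - z i)"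
  obtain \<sigma> where b: "bij_betw \<sigma> {..<n} {..<n}" and vv: "\<forall>i<n. vp i = cc n ^ (m + \<sigma> i + 1)"
    using sh unfolding shape_def by blast
  have I: "I < n" "\<forall>j<n. vp j \<le> vp I" using maxidx_prop[OF n] unfolding I_def by auto
  have c01: "0 < cc n" "cc n < 1" using cc_pos[OF n] cc_lt1[OF n] by auto
  have sI: "\<sigma> I = 0"
  proof -
    have "0 \<in> \<sigma> ` {..<n}" using b n unfolding bij_betw_def by auto
    then obtain i0 where i0: "i0 < n" "\<sigma> i0 = 0" by auto
    have "cc n ^ (m + 1) \<le> cc n ^ (m + \<sigma> I + 1)" using I vv i0 by (metis add_0_right)
    then have "m + \<sigma> I + 1 \<le> m + 1"
      using c01 by (simp add: power_decreasing_iff)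
    then show ?thesis by simp
  qed
  define \<tau> where "\<tau> = (\<lambda>i. if i = I then n - 1 else \<sigma> i - 1)"
  have sig_pos: "\<And>i. i < n \<Longrightarrow> i \<noteq> I \<Longrightarrow> \<sigma> i \<ge> 1"
  proof -
    fix i assume "i < n" "i \<noteq> I"
    then have "\<sigma> i \<noteq> \<sigma> I" using b I(1) unfolding bij_betw_def inj_on_def by auto
    then show "\<sigma> i \<ge> 1" using sI by simp
  qed
  have sig_lt: "\<And>i. i < n \<Longrightarrow> \<sigma> i < n" using b unfolding bij_betw_def by auto
  have inj: "inj_on \<tau> {..<n}"
  proof (rule inj_onI)
    fix i j assume ij: "i \<in> {..<n}" "j \<in> {..<n}" "\<tau> i = \<tau> j"
    show "i = j"
    proof (cases "i = I"; cases "j = I")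
      assume "i \<noteq> I" "j \<noteq> I"
      then have "\<sigma> i = \<sigma> j" using ij sig_pos[of i] sig_pos[of j] unfolding \<tau>_def by auto
      then show ?thesis using b ij unfolding bij_betw_def inj_on_def by auto
    next
      assume "i = I" "j \<noteq> I"
      then show ?thesis using ij sig_pos[of j] sig_lt[of j] unfolding \<tau>_def by auto
    next
      assume "i \<noteq> I" "j = I"
      then show ?thesis using ij sig_pos[of i] sig_lt[of i] unfolding \<tau>_def by auto
    qed auto
  qed
  have sub: "\<tau> ` {..<n} \<subseteq> {..<n}" using n sig_lt unfolding \<tau>_def by (auto simp: less_imp_diff_less)
  have "\<tau> ` {..<n} = {..<n}"
    using card_subset_eq[OF _ sub] card_image[OF inj] by auto
  then have bt: "bij_betw \<tau> {..<n} {..<n}" using inj unfolding bij_betw_def by auto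
  have vI: "v I = vp I / 2" unfolding v_def z_def unitv_def by simp
  have shv: "shape n v (Suc m)"
    unfolding shape_def
  proof (intro exI conjI allI impI)
    show "bij_betw \<tau> {..<n} {..<n}" by (rule bt)
    fix i assume i: "i < n"
    show "v i = cc n ^ (Suc m + \<tau> i + 1)"
    proof (cases "i = I")
      case True
      have "v i = cc n ^ (m + 1) / 2" using True vI vv I sI by simp
      also have "\<dots> = cc n ^ (m + 1) * cc n ^ n" using cc_pow[OF n] by simp
      also have "\<dots> = cc n ^ (Suc m + (n - 1) + 1)" using n by (simp add: power_add[symmetric])
      finally show ?thesis using True unfolding \<tau>_def by simp
    next
      case False
      have "v i = vp i" unfolding v_def z_def unitv_def using False by simp
      also have "\<dots> = cc n ^ (m + \<sigma> i + 1)" using vv i by simp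
      also have "m + \<sigma> i + 1 = Suc m + \<tau> i + 1" using sig_pos[OF i False] False unfolding \<tau>_def by simp
      finally show ?thesis .
    qed
  qed
  have nvp: "enorm n vp = theta n * enorm n v"
    using enorm_shape[OF n sh] enorm_shape[OF n shv] theta_cc[OF n]
    by (metis mult.assoc mult.left_commute mult_1 power_Suc)
  have zle: "enorm n z \<le> enorm n v"
    by (rule enorm_mono) (auto simp: z_def v_def unitv_def)
  have key: "f (proj n (\<lambda>i. xp i + s * z i)) \<le> f (proj n xp) - L * enorm n vp + (1 + theta n) * L * enorm n v"
    if s: "\<bar>s\<bar> = 1" for s
  proof -
    have "f (proj n (\<lambda>i. xp i + s * z i)) - f (proj n xp)
        \<le> L * enorm n (\<lambda>i. proj n (\<lambda>i. xp i + s * z i) i - proj n xp i)"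
      using lip proj_cube[of n] by (metis abs_le_D1)
    also have "\<dots> \<le> L * enorm n (\<lambda>i. (xp i + s * z i) - xp i)"
      using L proj_nonexp[of n "\<lambda>i. xp i + s * z i" xp] by (intro mult_left_mono) auto
    also have "enorm n (\<lambda>i. (xp i + s * z i) - xp i) = enorm n z"
    proof -
      have "s\<^sup>2 = 1" using s by (metis power2_abs power_one)
      then show ?thesis unfolding enorm_def by (simp add: power_mult_distrib)
    qed
    also have "L * enorm n z \<le> L * enorm n v" using zle L by simp
    finally show ?thesis using nvp by (simp add: algebra_simps)
  qed
  have cands: "split_cands n L xp vp (f (proj n xp)) =
      {# ((\<lambda>i. xp i + z i), v, f (proj n xp) - L * enorm n vp),
         ((\<lambda>i. xp i - z i), v, f (proj n xp) - L * enorm n vp) #}"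
    unfolding split_cands_def Let_def I_def z_def v_def by simp
  have k1: "f (proj n (\<lambda>i. xp i + z i)) \<le> f (proj n xp) - L * enorm n vp + (1 + theta n) * L * enorm n v"
    using key[of 1] by simp
  have k2: "f (proj n (\<lambda>i. xp i - z i)) \<le> f (proj n xp) - L * enorm n vp + (1 + theta n) * L * enorm n v"
    using key[of "-1"] by simp
  show ?thesis using c shv k1 k2 unfolding cands by auto
qed

definition inbox :: "nat \<Rightarrow> vec \<Rightarrow> vec \<Rightarrow> vec \<Rightarrow> bool" where
  "inbox n xs x v = (\<forall>i<n. \<bar>xs i - x i\<bar> \<le> v i)"

lemma score_le:
  assumes L: "L > 0"
    and lip: "\<forall>x\<in>cube n. \<forall>y\<in>cube n. \<bar>f x - f y\<bar> \<le> L * enorm n (\<lambda>i. x i - y i)"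
    and xs: "xs \<in> cube n" and ib: "inbox n xs x v"
  shows "f (proj n x) - L * enorm n v \<le> f xs"
proof -
  have "f (proj n x) - f xs \<le> L * enorm n (\<lambda>i. proj n x i - xs i)"
    using lip proj_cube[of n x] xs by (metis abs_le_D1)
  also have "\<dots> \<le> L * enorm n (\<lambda>i. x i - xs i)"
    using L proj_nonexp_cube[OF xs] by (intro mult_left_mono) auto
  also have "\<dots> \<le> L * enorm n v"
    using L ib unfolding inbox_def
    by (intro mult_left_mono enorm_mono) (auto simp: abs_minus_commute)
  finally show ?thesis by simp
qed

lemma cover_child:
  assumes L: "L > 0"
    and lip: "\<forall>x\<in>cube n. \<forall>y\<in>cube n. \<bar>f x - f y\<bar> \<le> L * enorm n (\<lambda>i. x i - y i)"
    and xs: "xs \<in> cube n" and ib: "inbox n xs x v"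
  shows "\<exists>c\<in>#split_cands n L x v (f (proj n x)). inbox n xs (fst c) (fst (snd c)) \<and> snd (snd c) \<le> f xs"
proof -
  define I where "I = maxidx n v"
  define z where "z = (\<lambda>i. (v I / 2) * unitv I i)"
  have sc: "f (proj n x) - L * enorm n v \<le> f xs" by (rule score_le[OF L lip xs ib])
  have cands: "split_cands n L x v (f (proj n x)) =
      {# ((\<lambda>i. x i + z i), (\<lambda>i. v i - z i), f (proj n x) - L * enorm n v),
         ((\<lambda>i. x i - z i), (\<lambda>i. v i - z i), f (proj n x) - L * enorm n v) #}"
    unfolding split_cands_def Let_def I_def z_def by simp
  show ?thesis
  proof (cases "I < n \<and> xs I - x I \<ge> 0")
    case True
    have "inbox n xs (\<lambda>i. x i + z i) (\<lambda>i. v i - z i)"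
      using ib True unfolding inbox_def z_def unitv_def by (auto simp: abs_if)
    then show ?thesis using sc unfolding cands by auto
  next
    case False
    have "inbox n xs (\<lambda>i. x i - z i) (\<lambda>i. v i - z i)"
      using ib False unfolding inbox_def z_def unitv_def by (auto simp: abs_if)
    then show ?thesis using sc unfolding cands by auto
  qed
qed

lemma x_init_coord: "i < n \<Longrightarrow> x_init n i = cc n ^ (i + 1)"
  unfolding x_init_def cc_def by (simp add: power_inverse)

lemma shape_init: "shape n (x_init n) 0"
  unfolding shape_def by (intro exI[of _ id]) (simp add: x_init_coord)

lemma inbox_init:
  assumes n: "n \<ge> 1" and xs: "xs \<in> cube n"
  shows "inbox n xs (x_init n) (x_init n)"
  unfolding inbox_def
proof (intro allI impI)
  fix i assume i: "i < n"
  have "cc n ^ n \<le> cc n ^ (i + 1)"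
    using i cc_pos[OF n] cc_lt1[OF n] by (intro power_decreasing) auto
  then have h: "1/2 \<le> cc n ^ (i + 1)" using cc_pow[OF n] by simp
  have "0 \<le> xs i" "xs i \<le> 1" using xs i unfolding cube_def by auto
  then show "\<bar>xs i - x_init n i\<bar> \<le> x_init n i" using h x_init_coord[OF i] by (simp add: abs_if)
qed

definition goodc :: "nat \<Rightarrow> real \<Rightarrow> (vec \<Rightarrow> real) \<Rightarrow> cand \<Rightarrow> bool" where
  "goodc n L f c = ((\<exists>m. shape n (fst (snd c)) m) \<and>
      f (proj n (fst c)) \<le> snd (snd c) + (1 + theta n) * L * enorm n (fst (snd c)))"

lemma invariant:
  assumes n: "n \<ge> 1" and L: "L > 0"
    and lip: "\<forall>x\<in>cube n. \<forall>y\<in>cube n. \<bar>f x - f y\<bar> \<le> L * enorm n (\<lambda>i. x i - y i)"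
    and xs: "xs \<in> cube n"
    and r: "algo_reach n L f S"
  shows "(\<forall>c\<in>#fst S. goodc n L f c) \<and>
         (\<exists>c\<in>#fst S. inbox n xs (fst c) (fst (snd c)) \<and> snd (snd c) \<le> f xs) \<and>
         (\<forall>h\<in>set (snd S). snd (snd h) - f xs \<le> (1 + theta n) * L * enorm n (fst (snd h)))"
  using r
proof (induction S rule: algo_reach.induct)
  case init
  have th: "0 \<le> theta n" using theta_gt1[OF n] by simp
  have g: "\<forall>c\<in>#split_cands n L (x_init n) (x_init n) (f (proj n (x_init n))). goodc n L f c"
    using child_good[OF n L lip shape_init] unfolding goodc_def by blast
  have cv: "\<exists>c\<in>#split_cands n L (x_init n) (x_init n) (f (proj n (x_init n))).
      inbox n xs (fst c) (fst (snd c)) \<and> snd (snd c) \<le> f xs"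
    by (rule cover_child[OF L lip xs inbox_init[OF n xs]])
  have "f (proj n (x_init n)) - L * enorm n (x_init n) \<le> f xs"
    by (rule score_le[OF L lip xs inbox_init[OF n xs]])
  moreover have "L * enorm n (x_init n) \<le> (1 + theta n) * L * enorm n (x_init n)"
    using L th enorm_nonneg[of n "x_init n"] by (simp add: algebra_simps)
  ultimately have h: "f (proj n (x_init n)) - f xs \<le> (1 + theta n) * L * enorm n (x_init n)"
    by linarith
  show ?case using g cv h by simp
next
  case (step C H c)
  define ch where "ch = split_cands n L (fst c) (fst (snd c)) (f (proj n (fst c)))"
  have IH1: "\<forall>c\<in>#C. goodc n L f c" and IH2: "\<exists>c\<in>#C. inbox n xs (fst c) (fst (snd c)) \<and> snd (snd c) \<le> f xs"
    and IH3: "\<forall>h\<in>set H. snd (snd h) - f xs \<le> (1 + theta n) * L * enorm n (fst (snd h))"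
    using step.IH by auto
  have gc: "goodc n L f c" using IH1 step.hyps(2) by blast
  then obtain m where sh: "shape n (fst (snd c)) m" unfolding goodc_def by blast
  have g1: "\<forall>d\<in>#C - {#c#}. goodc n L f d" using IH1 by (meson in_diffD)
  have g2: "\<forall>d\<in>#ch. goodc n L f d" unfolding ch_def
    using child_good[OF n L lip sh] unfolding goodc_def by blast
  obtain c0 where c0: "c0 \<in># C" "inbox n xs (fst c0) (fst (snd c0))" "snd (snd c0) \<le> f xs"
    using IH2 by blast
  have cv: "\<exists>d\<in>#C - {#c#} + ch. inbox n xs (fst d) (fst (snd d)) \<and> snd (snd d) \<le> f xs"
  proof (cases "c0 = c")
    case True
    then have "\<exists>d\<in>#ch. inbox n xs (fst d) (fst (snd d)) \<and> snd (snd d) \<le> f xs"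
      unfolding ch_def using cover_child[OF L lip xs] c0 by blast
    then show ?thesis by auto
  next
    case False
    then have "c0 \<in># C - {#c#}" using c0(1) by (simp add: in_diff_count count_gt_imp_in_mset)
    then show ?thesis using c0 by auto
  qed
  have "snd (snd c) \<le> snd (snd c0)" using step.hyps(3) c0(1) by blast
  then have h: "f (proj n (fst c)) - f xs \<le> (1 + theta n) * L * enorm n (fst (snd c))"
    using gc c0(3) unfolding goodc_def by linarith
  show ?case using g1 g2 cv h IH3 unfolding ch_def[symmetric] by auto
qed

theorem lemma3:
  fixes n :: nat and L :: real and f :: "vec \<Rightarrow> real" and xstar :: vec
    and C :: "cand multiset" and H :: "cand list" and T :: nat
  assumes "n \<ge> 1" and "L > 0"
    and "\<forall>x\<in>cube n. \<forall>y\<in>cube n. \<bar>f x - f y\<bar> \<le> L * enorm n (\<lambda>i. x i - y i)"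
    and "xstar \<in> cube n" and "\<forall>y\<in>cube n. f xstar \<le> f y"
    and "algo_reach n L f (C, H)" and "length H = T" and "T \<ge> 1"
  shows "(\<Sum>t<T. snd (snd (H ! t))) - (\<Sum>t<T. f xstar)
           \<le> (1 + theta n) * L * (\<Sum>t<T. enorm n (fst (snd (H ! t))))"
proof -
  have inv: "\<forall>h\<in>set H. snd (snd h) - f xstar \<le> (1 + theta n) * L * enorm n (fst (snd h))"
    using invariant[OF assms(1,2,3,4,6)] by simp
  have "(\<Sum>t<T. snd (snd (H ! t))) - (\<Sum>t<T. f xstar) = (\<Sum>t<T. snd (snd (H ! t)) - f xstar)"
    by (simp add: sum_subtractf)
  also have "\<dots> \<le> (\<Sum>t<T. (1 + theta n) * L * enorm n (fst (snd (H ! t))))"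
    using inv assms(7) by (intro sum_mono) auto
  also have "\<dots> = (1 + theta n) * L * (\<Sum>t<T. enorm n (fst (snd (H ! t))))"
    by (simp add: sum_distrib_left)
  finally show ?thesis .
qed

end
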